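(* Let $F \in S_d$ and let $\mathbb{X} \subset \mathbb{P}^n$ be a finite set of distinct points with $I_{\mathbb{X}} \subseteq F^\perp$. Let $I \subset T$ be any homogeneous ideal generated in degree $e>0$ and let $t \in I_e$. If $t$ is not a zero divisor in $T/(I_{\mathbb{X}} : I)$, then for all sufficiently large integers $s$ \[ e \cdot |\mathbb{X}| \;\geq\; \sum_{i=0}^s HF\big(T/((I_{\mathbb{X}} : I)+(t)),\, i\big) \;\geq\; \sum_{i=0}^{s} HF\big(T/((F^\perp : I)+( t) ),\, i\big). \]
   Context: $k$ is an algebraically closed field of characteristic zero, $S=k[x_0,\ldots,x_n]$ and $T=k[X_0,\ldots,X_n]$ (standard graded, $n\ge 1$), and $T$ acts on $S$ by differentiation: $X_i\circ F=\partial F/\partial x_i$, extended linearly. For a form $F\in S$, $F^\perp=\{g\in T : g\circ F=0\}$. For a homogeneous ideal $J\subseteq T$, $HF(T/J,i)=\dim_k T_i-\dim_k J_i$. $I_{\mathbb{X}}\subseteq T$ denotes the homogeneous ideal of the point set $\mathbb{X}$, and $J:I=\{g\in T: gI\subseteq J\}$. *)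

theory Defs
  imports "HOL-Library.Poly_Mapping" "HOL-Computational_Algebra.Polynomial"
begin

text \<open>Multivariate polynomials over 'k: finitely supported maps from monomials
  (exponent vectors, maps nat to nat of finite support) to coefficients.  Variable i is x_i (resp. X_i).
  S = k[x_0..x_n] and T = k[X_0..X_n] are both modelled by this type, restricted
  to polynomials whose monomials only involve variables 0..n.\<close>

type_synonym 'k mpoly = "(nat \<Rightarrow>\<^sub>0 nat) \<Rightarrow>\<^sub>0 'k"

definition alg_closed_field :: "'k::field itself \<Rightarrow> bool" where
  "alg_closed_field _ \<longleftrightarrow> (\<forall>p::'k poly. degree p > 0 \<longrightarrow> (\<exists>x. poly p x = 0))"

definition mon_deg :: "(nat \<Rightarrow>\<^sub>0 nat) \<Rightarrow> nat" where
  "mon_deg m = (\<Sum>i\<in>Poly_Mapping.keys m. Poly_Mapping.lookup m i)"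

definition polyring :: "nat \<Rightarrow> 'k::zero mpoly set" where
  "polyring n = {p. \<forall>m\<in>Poly_Mapping.keys p. Poly_Mapping.keys m \<subseteq> {..n}}"

definition forms :: "nat \<Rightarrow> nat \<Rightarrow> 'k::zero mpoly set" where
  "forms n d = {p \<in> polyring n. \<forall>m\<in>Poly_Mapping.keys p. mon_deg m = d}"

definition hcomp :: "nat \<Rightarrow> 'k::comm_monoid_add mpoly \<Rightarrow> 'k mpoly" where
  "hcomp j p = (\<Sum>m\<in>Poly_Mapping.keys p. if mon_deg m = j then Poly_Mapping.single m (Poly_Mapping.lookup p m) else 0)"

definition scal :: "'k::comm_semiring_1 \<Rightarrow> 'k mpoly \<Rightarrow> 'k mpoly" where
  "scal c p = Poly_Mapping.map ((*) c) p"

definition pderiv_var :: "nat \<Rightarrow> 'k::comm_semiring_1 mpoly \<Rightarrow> 'k mpoly" where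
  "pderiv_var i p = (\<Sum>m\<in>Poly_Mapping.keys p. if Poly_Mapping.lookup m i > 0
      then Poly_Mapping.single (m - Poly_Mapping.single i 1) (of_nat (Poly_Mapping.lookup m i) * Poly_Mapping.lookup p m) else 0)"

definition diff_mon :: "(nat \<Rightarrow>\<^sub>0 nat) \<Rightarrow> 'k::comm_semiring_1 mpoly \<Rightarrow> 'k mpoly" where
  "diff_mon \<alpha> F = fold (\<lambda>i. pderiv_var i ^^ Poly_Mapping.lookup \<alpha> i) (sorted_list_of_set (Poly_Mapping.keys \<alpha>)) F"

definition contract :: "'k::comm_semiring_1 mpoly \<Rightarrow> 'k mpoly \<Rightarrow> 'k mpoly" where
  "contract g F = (\<Sum>\<alpha>\<in>Poly_Mapping.keys g. scal (Poly_Mapping.lookup g \<alpha>) (diff_mon \<alpha> F))"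

definition perp :: "nat \<Rightarrow> 'k::comm_semiring_1 mpoly \<Rightarrow> 'k mpoly set" where
  "perp n F = {g \<in> polyring n. contract g F = 0}"

definition eval_mpoly :: "'k::comm_semiring_1 mpoly \<Rightarrow> (nat \<Rightarrow> 'k) \<Rightarrow> 'k" where
  "eval_mpoly p v = (\<Sum>m\<in>Poly_Mapping.keys p. Poly_Mapping.lookup p m * (\<Prod>i\<in>Poly_Mapping.keys m. v i ^ Poly_Mapping.lookup m i))"

text \<open>A finite set of distinct points of P^n, given by representative vectors.\<close>
definition proj_point_set :: "nat \<Rightarrow> (nat \<Rightarrow> 'k::field) set \<Rightarrow> bool" where
  "proj_point_set n P \<longleftrightarrow> finite P \<and> (\<forall>v\<in>P. \<exists>i\<le>n. v i \<noteq> 0) \<and>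
     (\<forall>v\<in>P. \<forall>w\<in>P. v \<noteq> w \<longrightarrow> \<not> (\<exists>c. \<forall>i\<le>n. w i = c * v i))"

definition ideal_pts :: "nat \<Rightarrow> (nat \<Rightarrow> 'k::field) set \<Rightarrow> 'k mpoly set" where
  "ideal_pts n P = {g \<in> polyring n. \<forall>j. \<forall>v\<in>P. eval_mpoly (hcomp j g) v = 0}"

definition is_ideal :: "nat \<Rightarrow> 'k::comm_ring_1 mpoly set \<Rightarrow> bool" where
  "is_ideal n J \<longleftrightarrow> J \<subseteq> polyring n \<and> 0 \<in> J \<and> (\<forall>a\<in>J. \<forall>b\<in>J. a + b \<in> J) \<and>
     (\<forall>a\<in>J. \<forall>h\<in>polyring n. h * a \<in> J)"

definition ideal_gen :: "nat \<Rightarrow> 'k::comm_ring_1 mpoly set \<Rightarrow> 'k mpoly set" where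
  "ideal_gen n G = {(\<Sum>g\<in>A. h g * g) | A h. finite A \<and> A \<subseteq> G \<and> (\<forall>g\<in>A. h g \<in> polyring n)}"

definition colon :: "nat \<Rightarrow> 'k::comm_ring_1 mpoly set \<Rightarrow> 'k mpoly set \<Rightarrow> 'k mpoly set" where
  "colon n J I = {g \<in> polyring n. \<forall>h\<in>I. g * h \<in> J}"

definition add_principal :: "nat \<Rightarrow> 'k::comm_ring_1 mpoly set \<Rightarrow> 'k mpoly \<Rightarrow> 'k mpoly set" where
  "add_principal n J t = {a + h * t | a h. a \<in> J \<and> h \<in> polyring n}"

definition nonzerodiv_mod :: "nat \<Rightarrow> 'k::comm_ring_1 mpoly \<Rightarrow> 'k mpoly set \<Rightarrow> bool" where
  "nonzerodiv_mod n t J \<longleftrightarrow> (\<forall>g\<in>polyring n. g * t \<in> J \<longrightarrow> g \<in> J)"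

definition kdim :: "'k::field mpoly set \<Rightarrow> nat" where
  "kdim V = vector_space.dim scal V"

definition HF :: "nat \<Rightarrow> 'k::field mpoly set \<Rightarrow> nat \<Rightarrow> int" where
  "HF n J i = int (kdim (forms n i :: 'k mpoly set)) - int (kdim (J \<inter> forms n i))"

end

theory Submission
  imports Defs "HOL-Library.FuncSet" "HOL-Library.Function_Algebras"
begin


context vector_space begin

lemma fam_indep:
  assumes fin: "finite A"
    and z: "\<And>u. (\<Sum>a\<in>A. scale (u a) (f a)) = 0 \<Longrightarrow> \<forall>a\<in>A. u a = 0"
  shows "inj_on f A \<and> independent (f ` A)"
proof -
  have inj: "inj_on f A"
  proof (rule inj_onI, rule ccontr)
    fix a b assume ab: "a \<in> A" "b \<in> A" "f a = f b" "a \<noteq> b"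
    define u where "u x = (if x = a then 1 else if x = b then -1 else (0::'a))" for x
    have "(\<Sum>x\<in>A. scale (u x) (f x)) = (\<Sum>x\<in>{a,b}. scale (u x) (f x))"
      using ab fin by (intro sum.mono_neutral_right) (auto simp: u_def)
    also have "\<dots> = 0" using ab by (simp add: u_def)
    finally have "\<forall>x\<in>A. u x = 0" by (rule z)
    then have "u a = 0" using ab(1) by (rule bspec)
    then show False by (simp add: u_def)
  qed
  have "independent (f ` A)"
  proof (rule independent_if_scalars_zero)
    show "finite (f ` A)" using fin by simp
    fix w y assume s: "(\<Sum>y\<in>f ` A. scale (w y) y) = 0" and y: "y \<in> f ` A"
    have "(\<Sum>x\<in>A. scale (w (f x)) (f x)) = 0" using s by (simp add: sum.reindex[OF inj])
    then have "\<forall>x\<in>A. w (f x) = 0" by (rule z)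
    with y show "w y = 0" by auto
  qed
  with inj show ?thesis by simp
qed

lemma indep_card_le_dim:
  assumes "independent A" "A \<subseteq> V" "V \<subseteq> span W" "finite W"
  shows "finite A \<and> card A \<le> dim V"
proof -
  obtain C where C: "A \<subseteq> C" "C \<subseteq> V" "independent C" "V \<subseteq> span C"
    using maximal_independent_subset_extend[OF assms(2,1)] by metis
  have "C \<subseteq> span W" using C(2) assms(3) by (rule order_trans)
  then have fC: "finite C" using independent_span_bound[OF assms(4) C(3)] by simp
  have cC: "card C = dim V" using basis_card_eq_dim[OF C(2) C(4) C(3)] .
  have "finite A" by (rule finite_subset[OF C(1) fC])
  moreover have "card A \<le> card C" by (rule card_mono[OF fC C(1)])
  ultimately show ?thesis using cC by simp
qed

lemma basis_ext_fin:
  assumes "independent A" "A \<subseteq> V" "V \<subseteq> span W" "finite W"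
  obtains C where "A \<subseteq> C" "C \<subseteq> V" "independent C" "V \<subseteq> span C" "finite C" "card C = dim V"
proof -
  obtain C where C: "A \<subseteq> C" "C \<subseteq> V" "independent C" "V \<subseteq> span C"
    using maximal_independent_subset_extend[OF assms(2,1)] by metis
  have "C \<subseteq> span W" using C(2) assms(3) by (rule order_trans)
  then have fC: "finite C" using independent_span_bound[OF assms(4) C(3)] by simp
  have cC: "card C = dim V" using basis_card_eq_dim[OF C(2) C(4) C(3)] .
  show ?thesis by (rule that[OF C fC cC])
qed

lemma basis_fin:
  assumes "V \<subseteq> span W" "finite W"
  obtains B where "B \<subseteq> V" "independent B" "V \<subseteq> span B" "finite B" "card B = dim V"
proof -
  obtain B where B: "{} \<subseteq> B" "B \<subseteq> V" "independent B" "V \<subseteq> span B" "finite B" "card B = dim V"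
    using basis_ext_fin[OF independent_empty _ assms] by blast
  show ?thesis by (rule that[OF B(2-6)])
qed

lemma dim_mono_fin:
  assumes "S \<subseteq> V" "V \<subseteq> span W" "finite W"
  shows "dim S \<le> dim V"
proof -
  have "S \<subseteq> span W" using assms(1,2) by (rule order_trans)
  then obtain B where B: "B \<subseteq> S" "independent B" "S \<subseteq> span B" "finite B" "card B = dim S"
    using basis_fin[of S W] assms(3) by metis
  have "B \<subseteq> V" using B(1) assms(1) by (rule order_trans)
  then have "card B \<le> dim V" using indep_card_le_dim[OF B(2) _ assms(2,3)] by simp
  then show ?thesis using B(5) by simp
qed

end

lemma scal_conv: "scal c p = Poly_Mapping.single 0 c * p"
  by (simp add: scal_def mult_map_scale_conv_mult)

interpretation mp: vector_space "scal :: 'k::field \<Rightarrow> 'k mpoly \<Rightarrow> 'k mpoly"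
proof unfold_locales
  fix a b :: 'k and x y :: "'k mpoly"
  show "scal a (x + y) = scal a x + scal a y" by (simp add: scal_conv distrib_left)
  show "scal (a + b) x = scal a x + scal b x" by (simp add: scal_conv single_add distrib_right)
  show "scal a (scal b x) = scal (a * b) x" by (simp add: scal_conv mult_single flip: mult.assoc)
  show "scal 1 x = x" by (simp add: scal_conv)
qed

lemma kdim_eq: "kdim V = mp.dim V"
  by (simp add: kdim_def)




lemma lookup_scal: "Poly_Mapping.lookup (scal c p) k = c * Poly_Mapping.lookup p k"
  by (simp add: scal_def map.rep_eq when_def)

lemma mpoly_expand:
  "p = (\<Sum>m\<in>Poly_Mapping.keys p. Poly_Mapping.single m (Poly_Mapping.lookup p m))"
proof (rule poly_mapping_eqI)
  fix k
  have "Poly_Mapping.lookup (\<Sum>m\<in>Poly_Mapping.keys p. Poly_Mapping.single m (Poly_Mapping.lookup p m)) k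
     = (\<Sum>m\<in>Poly_Mapping.keys p. if m = k then Poly_Mapping.lookup p m else 0)"
    by (simp add: lookup_sum lookup_single when_def)
  also have "\<dots> = Poly_Mapping.lookup p k" by (simp add: in_keys_iff)
  finally show "Poly_Mapping.lookup p k = Poly_Mapping.lookup (\<Sum>m\<in>Poly_Mapping.keys p. Poly_Mapping.single m (Poly_Mapping.lookup p m)) k" by simp
qed

lemma additive_eq:
  fixes F G :: "('m \<Rightarrow>\<^sub>0 'a::comm_monoid_add) \<Rightarrow> 'b::comm_monoid_add"
  assumes "F 0 = 0" "\<And>x y. F (x + y) = F x + F y"
    and "G 0 = 0" "\<And>x y. G (x + y) = G x + G y"
    and "\<And>m c. F (Poly_Mapping.single m c) = G (Poly_Mapping.single m c)"
  shows "F p = G p"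
proof -
  let ?s = "\<lambda>m. Poly_Mapping.single m (Poly_Mapping.lookup p m)"
  have "F p = F (sum ?s (Poly_Mapping.keys p))" by (subst mpoly_expand) (rule refl)
  also have "\<dots> = sum (F \<circ> ?s) (Poly_Mapping.keys p)" by (rule sum_comp_morphism[symmetric]) (use assms in auto)
  also have "\<dots> = sum (G \<circ> ?s) (Poly_Mapping.keys p)" using assms(5) by simp
  also have "\<dots> = G (sum ?s (Poly_Mapping.keys p))" by (rule sum_comp_morphism) (use assms in auto)
  also have "\<dots> = G p" by (subst (2) mpoly_expand) (rule refl)
  finally show ?thesis .
qed

lemma keys_add_nat: "Poly_Mapping.keys (a + b :: nat \<Rightarrow>\<^sub>0 nat) = Poly_Mapping.keys a \<union> Poly_Mapping.keys b"
  by (auto simp: in_keys_iff lookup_add)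

lemma mon_deg_add: "mon_deg (a + b) = mon_deg a + mon_deg b"
  unfolding mon_deg_def using setsum_keys_plus_distrib[of "\<lambda>k x. x" a b] by simp

lemma mon_deg_0[simp]: "mon_deg 0 = 0"
  by (simp add: mon_deg_def)

lemma lookup_hcomp:
  "Poly_Mapping.lookup (hcomp j p) m = (if mon_deg m = j then Poly_Mapping.lookup p m else 0)"
proof -
  have "Poly_Mapping.lookup (hcomp j p) m =
     (\<Sum>m'\<in>Poly_Mapping.keys p. if m' = m then (if mon_deg m = j then Poly_Mapping.lookup p m else 0) else 0)"
    unfolding hcomp_def lookup_sum by (rule sum.cong) (auto simp: lookup_single when_def)
  also have "\<dots> = (if mon_deg m = j then Poly_Mapping.lookup p m else 0)" by (simp add: in_keys_iff)
  finally show ?thesis .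
qed

lemma hcomp_add: "hcomp j (p + q) = hcomp j p + hcomp j q"
  by (rule poly_mapping_eqI) (simp add: lookup_hcomp lookup_add)

lemma hcomp_0[simp]: "hcomp j 0 = 0"
  by (rule poly_mapping_eqI) (simp add: lookup_hcomp)

lemma hcomp_single: "hcomp j (Poly_Mapping.single a c) = (if mon_deg a = j then Poly_Mapping.single a c else 0)"
  by (rule poly_mapping_eqI) (simp add: lookup_hcomp lookup_single when_def)



lemma hcomp_mult:
  fixes p q :: "'k::comm_ring_1 mpoly"
  shows "hcomp j (p * q) = (\<Sum>k\<le>j. hcomp k p * hcomp (j - k) q)"
proof -
  have single: "hcomp j (Poly_Mapping.single a c * q) = (\<Sum>k\<le>j. hcomp k (Poly_Mapping.single a c) * hcomp (j - k) q)" for a c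
  proof (rule additive_eq[where F = "\<lambda>q. hcomp j (Poly_Mapping.single a c * q)"
        and G = "\<lambda>q. \<Sum>k\<le>j. hcomp k (Poly_Mapping.single a c) * hcomp (j - k) q"])
    fix b d
    have "(\<Sum>k\<le>j. hcomp k (Poly_Mapping.single a c) * hcomp (j - k) (Poly_Mapping.single b d))
       = (\<Sum>k\<le>j. if k = mon_deg a then (if mon_deg b = j - mon_deg a then Poly_Mapping.single (a + b) (c * d) else 0) else 0)"
      by (rule sum.cong) (simp_all add: hcomp_single mult_single)
    also have "\<dots> = hcomp j (Poly_Mapping.single a c * Poly_Mapping.single b d)"
      by (simp add: hcomp_single mult_single mon_deg_add) arith
    finally show "hcomp j (Poly_Mapping.single a c * Poly_Mapping.single b d) =
       (\<Sum>k\<le>j. hcomp k (Poly_Mapping.single a c) * hcomp (j - k) (Poly_Mapping.single b d))" by simp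
  qed (simp_all add: hcomp_add distrib_left sum.distrib)
  show ?thesis
  proof (rule additive_eq[where F = "\<lambda>p. hcomp j (p * q)" and G = "\<lambda>p. \<Sum>k\<le>j. hcomp k p * hcomp (j - k) q"])
    fix a c show "hcomp j (Poly_Mapping.single a c * q) = (\<Sum>k\<le>j. hcomp k (Poly_Mapping.single a c) * hcomp (j - k) q)"
      by (rule single)
  qed (simp_all add: hcomp_add distrib_right sum.distrib)
qed

definition mon :: "(nat \<Rightarrow>\<^sub>0 nat) \<Rightarrow> (nat \<Rightarrow> 'k::comm_semiring_1) \<Rightarrow> 'k" where
  "mon m v = (\<Prod>i\<in>Poly_Mapping.keys m. v i ^ Poly_Mapping.lookup m i)"

lemma mon_add: "mon (a + b) v = mon a v * mon b v"
proof -
  let ?U = "Poly_Mapping.keys a \<union> Poly_Mapping.keys b"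
  have "mon (a + b) v = (\<Prod>i\<in>?U. v i ^ Poly_Mapping.lookup a i * v i ^ Poly_Mapping.lookup b i)"
    unfolding mon_def keys_add_nat by (simp add: lookup_add power_add)
  also have "\<dots> = (\<Prod>i\<in>?U. v i ^ Poly_Mapping.lookup a i) * (\<Prod>i\<in>?U. v i ^ Poly_Mapping.lookup b i)"
    by (rule prod.distrib)
  also have "(\<Prod>i\<in>?U. v i ^ Poly_Mapping.lookup a i) = mon a v"
    unfolding mon_def by (rule prod.mono_neutral_right) (auto simp: in_keys_iff)
  also have "(\<Prod>i\<in>?U. v i ^ Poly_Mapping.lookup b i) = mon b v"
    unfolding mon_def by (rule prod.mono_neutral_right) (auto simp: in_keys_iff)
  finally show ?thesis .
qed

lemma mon_0[simp]: "mon 0 v = 1"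
  by (simp add: mon_def)

lemma eval_add: "eval_mpoly (p + q) v = eval_mpoly p v + eval_mpoly q v"
  unfolding eval_mpoly_def mon_def[symmetric]
  by (rule setsum_keys_plus_distrib) (simp_all add: distrib_right)

lemma eval_0[simp]: "eval_mpoly 0 v = 0"
  by (simp add: eval_mpoly_def)

lemma eval_single: "eval_mpoly (Poly_Mapping.single m c) v = c * mon m v"
  by (simp add: eval_mpoly_def mon_def)

lemma eval_mult:
  fixes p q :: "'k::comm_ring_1 mpoly"
  shows "eval_mpoly (p * q) v = eval_mpoly p v * eval_mpoly q v"
proof -
  have single: "eval_mpoly (Poly_Mapping.single a c * q) v = eval_mpoly (Poly_Mapping.single a c) v * eval_mpoly q v" for a c
    by (rule additive_eq[where F = "\<lambda>q. eval_mpoly (Poly_Mapping.single a c * q) v"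
        and G = "\<lambda>q. eval_mpoly (Poly_Mapping.single a c) v * eval_mpoly q v"])
      (simp_all add: eval_add distrib_left mult_single eval_single mon_add)
  show ?thesis
    by (rule additive_eq[where F = "\<lambda>p. eval_mpoly (p * q) v" and G = "\<lambda>p. eval_mpoly p v * eval_mpoly q v"])
      (simp_all add: eval_add distrib_right single)
qed

lemma eval_sum: "eval_mpoly (sum f A) v = (\<Sum>a\<in>A. eval_mpoly (f a) v)"
  using sum_comp_morphism[of "\<lambda>p. eval_mpoly p v" f A] by (simp add: eval_add o_def)

lemma eval_scal: "eval_mpoly (scal c (p :: 'k::comm_ring_1 mpoly)) v = c * eval_mpoly p v"
  by (simp add: scal_conv eval_mult eval_single)



lemma polyring_0[simp]: "0 \<in> polyring n"
  by (simp add: polyring_def)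

lemma polyring_add: "p \<in> polyring n \<Longrightarrow> q \<in> polyring n \<Longrightarrow> p + q \<in> polyring n"
  unfolding polyring_def using keys_add[of p q] by blast

lemma polyring_mult:
  assumes "p \<in> polyring n" "q \<in> polyring n"
  shows "p * q \<in> polyring n"
proof -
  have "\<forall>m\<in>Poly_Mapping.keys (p * q). Poly_Mapping.keys m \<subseteq> {..n}"
  proof
    fix m assume "m \<in> Poly_Mapping.keys (p * q)"
    then have "m \<in> {a + b |a b. a \<in> Poly_Mapping.keys p \<and> b \<in> Poly_Mapping.keys q}"
      by (rule subsetD[OF keys_mult[of p q]])
    then obtain a b where ab: "m = a + b" "a \<in> Poly_Mapping.keys p" "b \<in> Poly_Mapping.keys q"
      by blast
    have "Poly_Mapping.keys a \<subseteq> {..n}" "Poly_Mapping.keys b \<subseteq> {..n}"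
      using assms ab(2,3) unfolding polyring_def by auto
    then show "Poly_Mapping.keys m \<subseteq> {..n}" using ab(1) keys_add_nat[of a b] by simp
  qed
  then show ?thesis unfolding polyring_def by simp
qed

lemma polyring_single0[simp]: "Poly_Mapping.single 0 c \<in> polyring n"
  by (simp add: polyring_def)

lemma polyring_scal: "p \<in> polyring n \<Longrightarrow> scal c (p :: 'k::field mpoly) \<in> polyring n"
  by (simp add: scal_conv polyring_mult)

lemma subspace_polyring: "mp.subspace (polyring n :: 'k::field mpoly set)"
  by (rule mp.subspaceI) (simp_all add: polyring_add polyring_scal)

lemma polyring_sum: "(\<And>a. a \<in> A \<Longrightarrow> f a \<in> polyring n) \<Longrightarrow> sum f A \<in> (polyring n :: 'k::field mpoly set)"
  by (rule mp.subspace_sum[OF subspace_polyring])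

lemma keys_scal: "Poly_Mapping.keys (scal c p) \<subseteq> Poly_Mapping.keys p"
  by (auto simp: in_keys_iff lookup_scal)

lemma forms_sub: "forms n i \<subseteq> polyring n"
  by (auto simp: forms_def)

lemma forms_0[simp]: "0 \<in> forms n i"
  by (simp add: forms_def)

lemma forms_add: "p \<in> forms n i \<Longrightarrow> q \<in> forms n i \<Longrightarrow> p + q \<in> forms n i"
  unfolding forms_def using keys_add[of p q] polyring_add[of p n q] by blast

lemma forms_scal: "p \<in> forms n i \<Longrightarrow> scal c (p :: 'k::field mpoly) \<in> forms n i"
  unfolding forms_def using keys_scal[of c p] polyring_scal[of p n c] by blast

lemma subspace_forms: "mp.subspace (forms n i :: 'k::field mpoly set)"
  by (rule mp.subspaceI) (simp_all add: forms_add forms_scal)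

lemma forms_mult:
  assumes "p \<in> forms n a" "q \<in> forms n b"
  shows "p * q \<in> forms n (a + b)"
proof -
  have "p * q \<in> polyring n" using assms forms_sub polyring_mult by blast
  moreover have "mon_deg m = a + b" if "m \<in> Poly_Mapping.keys (p * q)" for m
  proof -
    have "m \<in> {a + b |a b. a \<in> Poly_Mapping.keys p \<and> b \<in> Poly_Mapping.keys q}"
      using keys_mult[of p q] that by (rule subsetD)
    then obtain x y where xy: "m = x + y" "x \<in> Poly_Mapping.keys p" "y \<in> Poly_Mapping.keys q"
      by blast
    then show ?thesis using assms unfolding forms_def by (simp add: mon_deg_add)
  qed
  ultimately show ?thesis unfolding forms_def by blast
qed

section \<open>Finite spanning set for forms\<close>

definition monset :: "nat \<Rightarrow> nat \<Rightarrow> (nat \<Rightarrow>\<^sub>0 nat) set" where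
  "monset n i = {m. Poly_Mapping.keys m \<subseteq> {..n} \<and> mon_deg m = i}"

lemma lookup_le_mon_deg: "Poly_Mapping.lookup m j \<le> mon_deg m"
proof (cases "j \<in> Poly_Mapping.keys m")
  case True
  then show ?thesis unfolding mon_deg_def by (intro member_le_sum) auto
next
  case False
  then show ?thesis by (simp add: in_keys_iff)
qed

lemma finite_monset: "finite (monset n i)"
proof -
  let ?F = "\<lambda>f. Abs_poly_mapping (\<lambda>j. if j \<le> n then f j else (0::nat))"
  have "monset n i \<subseteq> ?F ` (PiE {..n} (\<lambda>_. {..i}))"
  proof
    fix m assume m: "m \<in> monset n i"
    have eq: "(\<lambda>j. if j \<le> n then restrict (Poly_Mapping.lookup m) {..n} j else 0) = Poly_Mapping.lookup m"
    proof
      fix j show "(if j \<le> n then restrict (Poly_Mapping.lookup m) {..n} j else 0) = Poly_Mapping.lookup m j"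
        using m by (auto simp: monset_def in_keys_iff restrict_apply)
    qed
    have "m = ?F (restrict (Poly_Mapping.lookup m) {..n})"
      by (simp only: eq lookup_inverse)
    moreover have "restrict (Poly_Mapping.lookup m) {..n} \<in> PiE {..n} (\<lambda>_. {..i})"
      using m lookup_le_mon_deg[of m] by (auto simp: monset_def)
    ultimately show "m \<in> ?F ` (PiE {..n} (\<lambda>_. {..i}))" by blast
  qed
  moreover have "finite (PiE {..n} (\<lambda>_. {..i::nat}))" by (rule finite_PiE) auto
  ultimately show ?thesis using finite_subset by blast
qed

definition Wf :: "nat \<Rightarrow> nat \<Rightarrow> 'k::field mpoly set" where
  "Wf n i = (\<lambda>m. Poly_Mapping.single m 1) ` monset n i"

lemma finite_Wf: "finite (Wf n i)"
  by (simp add: Wf_def finite_monset)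

lemma single_scal: "Poly_Mapping.single m c = scal c (Poly_Mapping.single m (1::'k::field))"
  by (rule poly_mapping_eqI) (simp add: lookup_scal lookup_single when_def)

lemma forms_span: "forms n i \<subseteq> mp.span (Wf n i :: 'k::field mpoly set)"
proof
  fix p :: "'k mpoly" assume p: "p \<in> forms n i"
  have "p = (\<Sum>m\<in>Poly_Mapping.keys p. Poly_Mapping.single m (Poly_Mapping.lookup p m))"
    by (rule mpoly_expand)
  also have "\<dots> \<in> mp.span (Wf n i)"
  proof (rule mp.span_sum)
    fix m assume m: "m \<in> Poly_Mapping.keys p"
    then have "m \<in> monset n i" using p by (auto simp: forms_def polyring_def monset_def)
    then have "Poly_Mapping.single m 1 \<in> mp.span (Wf n i)"
      by (intro mp.span_base) (simp add: Wf_def)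
    then show "Poly_Mapping.single m (Poly_Mapping.lookup p m) \<in> mp.span (Wf n i)"
      by (subst single_scal) (rule mp.span_scale)
  qed
  finally show "p \<in> mp.span (Wf n i)" .
qed

section \<open>Ideal of points\<close>

lemma ideal_pts_0[simp]: "0 \<in> ideal_pts n P"
  by (simp add: ideal_pts_def)

lemma ideal_pts_add: "a \<in> ideal_pts n P \<Longrightarrow> b \<in> ideal_pts n P \<Longrightarrow> a + b \<in> ideal_pts n P"
  by (simp add: ideal_pts_def polyring_add hcomp_add eval_add)

lemma ideal_pts_mult:
  assumes g: "g \<in> ideal_pts n P" and h: "h \<in> polyring n"
  shows "h * g \<in> ideal_pts n (P :: (nat \<Rightarrow> 'k::field) set)"
proof -
  have "h * g \<in> polyring n" using g h polyring_mult by (auto simp: ideal_pts_def)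
  moreover have "eval_mpoly (hcomp j (h * g)) v = 0" if "v \<in> P" for j v
  proof -
    have "eval_mpoly (hcomp j (h * g)) v = (\<Sum>k\<le>j. eval_mpoly (hcomp k h) v * eval_mpoly (hcomp (j - k) g) v)"
      by (simp add: hcomp_mult eval_sum eval_mult)
    also have "\<dots> = 0" using g that by (simp add: ideal_pts_def)
    finally show ?thesis .
  qed
  ultimately show ?thesis by (simp add: ideal_pts_def)
qed

lemma form_vanish_ideal_pts:
  assumes p: "p \<in> forms n i" and van: "\<And>v. v \<in> P \<Longrightarrow> eval_mpoly p v = 0"
  shows "p \<in> ideal_pts n P"
proof -
  have hc: "hcomp j p = (if j = i then p else 0)" for j
  proof (rule poly_mapping_eqI)
    fix m
    show "Poly_Mapping.lookup (hcomp j p) m = Poly_Mapping.lookup (if j = i then p else 0) m"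
      using p by (auto simp: lookup_hcomp forms_def in_keys_iff)
  qed
  show ?thesis using p van forms_sub by (auto simp: ideal_pts_def hc)
qed

section \<open>Colon ideal\<close>

lemma colon_sub: "colon n J I \<subseteq> polyring n"
  by (auto simp: colon_def)

lemma colon_mono: "J \<subseteq> J' \<Longrightarrow> colon n J I \<subseteq> colon n J' I"
  by (auto simp: colon_def)

lemma subspace_colon_pts: "mp.subspace (colon n (ideal_pts n (P :: (nat \<Rightarrow> 'k::field) set)) I)"
proof (rule mp.subspaceI)
  show "0 \<in> colon n (ideal_pts n P) I" by (simp add: colon_def)
next
  fix x y assume "x \<in> colon n (ideal_pts n P) I" "y \<in> colon n (ideal_pts n P) I"
  then show "x + y \<in> colon n (ideal_pts n P) I"
    by (simp add: colon_def polyring_add distrib_right ideal_pts_add)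
next
  fix c x assume x: "x \<in> colon n (ideal_pts n P) I"
  have "scal c x * h \<in> ideal_pts n P" if "h \<in> I" for h
  proof -
    have "scal c x * h = Poly_Mapping.single 0 c * (x * h)" by (simp add: scal_conv mult.assoc)
    also have "\<dots> \<in> ideal_pts n P" by (rule ideal_pts_mult) (use x that in \<open>auto simp: colon_def\<close>)
    finally show ?thesis .
  qed
  then show "scal c x \<in> colon n (ideal_pts n P) I"
    using x by (simp add: colon_def polyring_scal)
qed

lemma ideal_pts_sub_colon:
  assumes "I \<subseteq> polyring n"
  shows "ideal_pts n P \<subseteq> colon n (ideal_pts n (P :: (nat \<Rightarrow> 'k::field) set)) I"
proof
  fix g assume g: "g \<in> ideal_pts n P"
  have "g * h \<in> ideal_pts n P" if "h \<in> I" for h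
    using ideal_pts_mult[OF g, of h] that assms by (auto simp: mult.commute)
  then show "g \<in> colon n (ideal_pts n P) I" using g by (simp add: colon_def ideal_pts_def)
qed

lemma ideal_gen_sub:
  assumes "G \<subseteq> polyring n"
  shows "ideal_gen n G \<subseteq> (polyring n :: 'k::field mpoly set)"
proof
  fix x assume "x \<in> ideal_gen n G"
  then obtain A h where x: "x = (\<Sum>g\<in>A. h g * g)" "A \<subseteq> G" "\<forall>g\<in>A. h g \<in> polyring n"
    by (auto simp: ideal_gen_def)
  show "x \<in> polyring n" unfolding x(1)
    by (rule polyring_sum) (use x assms in \<open>auto intro: polyring_mult\<close>)
qed



lemma sum_fun_apply: "(sum f A) x = (\<Sum>a\<in>A. f a x)"
  by (induct A rule: infinite_finite_induct) auto

interpretation fv: vector_space "(\<lambda>c f v. c * f v) :: 'k::field \<Rightarrow> ((nat \<Rightarrow> 'k) \<Rightarrow> 'k) \<Rightarrow> ((nat \<Rightarrow> 'k) \<Rightarrow> 'k)"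
  by unfold_locales (simp_all add: fun_eq_iff algebra_simps)

lemma scal_sum_left_mult:
  fixes t :: "'k::field mpoly"
  shows "t * (\<Sum>d\<in>D. scal (u d) d) = (\<Sum>d\<in>D. scal (u d) (t * d))"
  by (simp add: sum_distrib_left scal_conv mult.left_commute)

lemma hf_le_card:
  fixes P :: "(nat \<Rightarrow> 'k::field) set"
  assumes finP: "finite P" and Ipr: "I \<subseteq> polyring n"
  shows "int (kdim (forms n i :: 'k mpoly set)) - int (kdim (colon n (ideal_pts n P) I \<inter> forms n i)) \<le> int (card P)"
proof -
  define J where "J = colon n (ideal_pts n P) I"
  define Ji where "Ji = J \<inter> forms n i"
  have subJ: "mp.subspace J" unfolding J_def by (rule subspace_colon_pts)
  have subJi: "mp.subspace Ji" unfolding Ji_def by (rule mp.subspace_inter[OF subJ subspace_forms])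
  have Ji_f: "Ji \<subseteq> forms n i" by (simp add: Ji_def)
  have Ji_span: "Ji \<subseteq> mp.span (Wf n i)" using Ji_f forms_span by blast
  obtain E where E: "E \<subseteq> Ji" "mp.independent E" "Ji \<subseteq> mp.span E" "finite E" "card E = mp.dim Ji"
    using mp.basis_fin[OF Ji_span finite_Wf] by metis
  have Ef: "E \<subseteq> forms n i" using E(1) Ji_f by (rule order_trans)
  obtain C where C: "E \<subseteq> C" "C \<subseteq> forms n i" "mp.independent C" "forms n i \<subseteq> mp.span C"
      "finite C" "card C = mp.dim (forms n i :: 'k mpoly set)"
    by (rule mp.basis_ext_fin[OF E(2) Ef forms_span finite_Wf])
  define D where "D = C - E"
  have finD: "finite D" using C(5) by (simp add: D_def)
  have cardD: "card D = card C - card E" unfolding D_def using C(1) E(4) by (simp add: card_Diff_subset)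
  define ev where "ev c = (\<lambda>v. if v \<in> P then eval_mpoly c v else 0)" for c :: "'k mpoly"
  define dl where "dl w = (\<lambda>v. if v = w then 1 else (0::'k))" for w :: "nat \<Rightarrow> 'k"
  have ev_span: "ev c \<in> fv.span (dl ` P)" for c
  proof -
    have "ev c = (\<Sum>w\<in>P. (\<lambda>v. eval_mpoly c w * dl w v))"
    proof
      fix v
      have "(\<Sum>w\<in>P. (\<lambda>v. eval_mpoly c w * dl w v)) v = (\<Sum>w\<in>P. if v = w then eval_mpoly c w else 0)"
        by (simp add: sum_fun_apply dl_def) (rule sum.cong; simp)
      also have "\<dots> = ev c v" using finP by (simp add: ev_def)
      finally show "ev c v = (\<Sum>w\<in>P. (\<lambda>v. eval_mpoly c w * dl w v)) v" by simp
    qed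
    also have "\<dots> \<in> fv.span (dl ` P)"
      by (intro fv.span_sum fv.span_scale fv.span_base) simp
    finally show ?thesis .
  qed
  have fam: "inj_on ev D \<and> fv.independent (ev ` D)"
  proof (rule fv.fam_indep[OF finD])
    fix u assume s: "(\<Sum>a\<in>D. (\<lambda>v. u a * ev a v)) = 0"
    define p where "p = (\<Sum>c\<in>D. scal (u c) c)"
    have pf: "p \<in> forms n i" unfolding p_def
      by (rule mp.subspace_sum[OF subspace_forms]) (use C(2) in \<open>auto simp: D_def intro: forms_scal\<close>)
    have "eval_mpoly p v = 0" if v: "v \<in> P" for v
    proof -
      have "0 = (\<Sum>a\<in>D. (\<lambda>v. u a * ev a v)) v" using s by simp
      also have "\<dots> = (\<Sum>a\<in>D. u a * eval_mpoly a v)" using v by (simp add: sum_fun_apply ev_def)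
      also have "\<dots> = eval_mpoly p v" by (simp add: p_def eval_sum eval_scal)
      finally show ?thesis by simp
    qed
    then have "p \<in> ideal_pts n P" using pf by (intro form_vanish_ideal_pts)
    then have "p \<in> J" unfolding J_def using ideal_pts_sub_colon[OF Ipr] by blast
    then have "p \<in> Ji" using pf by (simp add: Ji_def)
    then have "p \<in> mp.span E" using E(3) by blast
    then obtain w where w: "p = (\<Sum>x\<in>E. scal (w x) x)" using mp.span_finite[OF E(4)] by blast
    define co where "co x = (if x \<in> D then u x else - w x)" for x
    have CDE: "C = D \<union> E" "D \<inter> E = {}" using C(1) by (auto simp: D_def)
    have "(\<Sum>x\<in>C. scal (co x) x) = (\<Sum>x\<in>D. scal (co x) x) + (\<Sum>x\<in>E. scal (co x) x)"
      unfolding CDE(1) by (rule sum.union_disjoint) (use finD E(4) CDE(2) in auto)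
    also have "(\<Sum>x\<in>D. scal (co x) x) = p" unfolding p_def by (rule sum.cong) (simp_all add: co_def)
    also have "(\<Sum>x\<in>E. scal (co x) x) = - p" unfolding w sum_negf[symmetric]
    proof (rule sum.cong)
      fix x assume "x \<in> E"
      then have "x \<notin> D" using CDE(2) by blast
      then show "scal (co x) x = - scal (w x) x" by (simp add: co_def mp.scale_minus_left)
    qed simp
    finally have "(\<Sum>x\<in>C. scal (co x) x) = 0" by simp
    then have "\<forall>x\<in>C. co x = 0" using mp.independentD[OF C(3) C(5) order_refl] by blast
    then show "\<forall>a\<in>D. u a = 0" by (auto simp: co_def D_def)
  qed
  have "ev ` D \<subseteq> fv.span (dl ` P)" using ev_span by blast
  then have "card (ev ` D) \<le> card (dl ` P)"
    using fv.independent_span_bound[of "dl ` P" "ev ` D"] finP fam by simp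
  also have "\<dots> \<le> card P" using finP by (rule card_image_le)
  finally have "card D \<le> card P" using fam card_image by metis
  then show ?thesis using cardD C(6) E(5) card_mono[OF C(5) C(1)]
    by (simp add: kdim_eq J_def[symmetric] Ji_def[symmetric])
qed



lemma add_principal_mono: "J \<subseteq> J' \<Longrightarrow> add_principal n J t \<subseteq> add_principal n J' t"
  by (auto simp: add_principal_def)

lemma J_sub_K: "J \<inter> forms n i \<subseteq> add_principal n J t \<inter> forms n i"
proof
  fix x assume x: "x \<in> J \<inter> forms n i"
  have "\<exists>a h. x = a + h * t \<and> a \<in> J \<and> h \<in> polyring n"
    using x by (intro exI[of _ x] exI[of _ 0]) simp
  then have "x \<in> add_principal n J t" unfolding add_principal_def by simp
  then show "x \<in> add_principal n J t \<inter> forms n i" using x by blast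
qed

lemma hf_step:
  fixes J :: "'k::field mpoly set"
  assumes subJ: "mp.subspace J" and Jpr: "J \<subseteq> polyring n"
    and nzd: "nonzerodiv_mod n t J" and tf: "t \<in> forms n e" and ei: "e \<le> i"
  shows "int (kdim (J \<inter> forms n i)) + int (kdim (forms n (i - e) :: 'k mpoly set)) - int (kdim (J \<inter> forms n (i - e)))
     \<le> int (kdim (add_principal n J t \<inter> forms n i))"
proof -
  define i' where "i' = i - e"
  define Ji where "Ji = J \<inter> forms n i"
  define Ji' where "Ji' = J \<inter> forms n i'"
  define K where "K = add_principal n J t \<inter> forms n i"
  have Ji_span: "Ji \<subseteq> mp.span (Wf n i)" using forms_span unfolding Ji_def by blast
  have Ji'_span: "Ji' \<subseteq> mp.span (Wf n i')" using forms_span unfolding Ji'_def by blast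
  have K_span: "K \<subseteq> mp.span (Wf n i)" using forms_span unfolding K_def by blast
  obtain E where E: "E \<subseteq> Ji" "mp.independent E" "Ji \<subseteq> mp.span E" "finite E" "card E = mp.dim Ji"
    by (rule mp.basis_fin[OF Ji_span finite_Wf])
  obtain B where B: "B \<subseteq> Ji'" "mp.independent B" "Ji' \<subseteq> mp.span B" "finite B" "card B = mp.dim Ji'"
    by (rule mp.basis_fin[OF Ji'_span finite_Wf])
  have Bf: "B \<subseteq> forms n i'" using B(1) unfolding Ji'_def by blast
  obtain C where C: "B \<subseteq> C" "C \<subseteq> forms n i'" "mp.independent C" "forms n i' \<subseteq> mp.span C"
      "finite C" "card C = mp.dim (forms n i' :: 'k mpoly set)"
    by (rule mp.basis_ext_fin[OF B(2) Bf forms_span finite_Wf])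
  define D where "D = C - B"
  have finD: "finite D" using C(5) by (simp add: D_def)
  have cardD: "card D = card C - card B" unfolding D_def using C(1) B(4) by (simp add: card_Diff_subset)
  have DC: "D \<subseteq> C" by (auto simp: D_def)
  have Df: "D \<subseteq> forms n i'" using DC C(2) by blast
  have EJ: "E \<subseteq> J" using E(1) unfolding Ji_def by blast
  define g where "g = case_sum (\<lambda>x. x) (\<lambda>d. t * d)"
  have fam: "inj_on g (E <+> D) \<and> mp.independent (g ` (E <+> D))"
  proof (rule mp.fam_indep)
    show "finite (E <+> D)" using E(4) finD by simp
  next
    fix u assume s: "(\<Sum>a\<in>E <+> D. scal (u a) (g a)) = 0"
    define s1 where "s1 = (\<Sum>x\<in>E. scal (u (Inl x)) x)"
    define q where "q = (\<Sum>d\<in>D. scal (u (Inr d)) d)"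
    have "(\<Sum>a\<in>E <+> D. scal (u a) (g a)) = s1 + (\<Sum>d\<in>D. scal (u (Inr d)) (t * d))"
      unfolding s1_def using E(4) finD by (simp add: sum.Plus g_def o_def)
    also have "(\<Sum>d\<in>D. scal (u (Inr d)) (t * d)) = t * q"
      unfolding q_def by (rule scal_sum_left_mult[symmetric])
    finally have s': "s1 + t * q = 0" using s by simp
    have s1J: "s1 \<in> J" unfolding s1_def
      by (rule mp.subspace_sum[OF subJ]) (use EJ in \<open>auto intro: mp.subspace_scale[OF subJ]\<close>)
    have "t * q = - s1" using s' by (simp add: eq_neg_iff_add_eq_0 add.commute)
    then have tqJ: "q * t \<in> J" using mp.subspace_neg[OF subJ s1J] by (simp add: mult.commute)
    have qf: "q \<in> forms n i'" unfolding q_def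
      by (rule mp.subspace_sum[OF subspace_forms]) (use Df in \<open>auto intro: forms_scal\<close>)
    then have "q \<in> polyring n" using forms_sub by blast
    then have "q \<in> J" using nzd tqJ by (simp add: nonzerodiv_mod_def)
    then have "q \<in> Ji'" using qf by (simp add: Ji'_def)
    then have "q \<in> mp.span B" using B(3) by blast
    then obtain w where w: "q = (\<Sum>x\<in>B. scal (w x) x)" using mp.span_finite[OF B(4)] by blast
    define co where "co x = (if x \<in> D then u (Inr x) else - w x)" for x
    have CDB: "C = D \<union> B" "D \<inter> B = {}" using C(1) by (auto simp: D_def)
    have "(\<Sum>x\<in>C. scal (co x) x) = (\<Sum>x\<in>D. scal (co x) x) + (\<Sum>x\<in>B. scal (co x) x)"
      unfolding CDB(1) by (rule sum.union_disjoint) (use finD B(4) CDB(2) in auto)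
    also have "(\<Sum>x\<in>D. scal (co x) x) = q" unfolding q_def by (rule sum.cong) (simp_all add: co_def)
    also have "(\<Sum>x\<in>B. scal (co x) x) = - q" unfolding w sum_negf[symmetric]
    proof (rule sum.cong)
      fix x assume "x \<in> B"
      then have "x \<notin> D" using CDB(2) by blast
      then show "scal (co x) x = - scal (w x) x" by (simp add: co_def mp.scale_minus_left)
    qed simp
    finally have "(\<Sum>x\<in>C. scal (co x) x) = 0" by simp
    then have "\<forall>x\<in>C. co x = 0" using mp.independentD[OF C(3) C(5) order_refl] by blast
    then have uD: "\<forall>d\<in>D. u (Inr d) = 0"
    proof -
      assume all: "\<forall>x\<in>C. co x = 0"
      show ?thesis
      proof
        fix d assume d: "d \<in> D"
        then have "d \<in> C" using DC by blast
        then have "co d = 0" using all by (rule_tac bspec)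
        then show "u (Inr d) = 0" using d by (simp add: co_def)
      qed
    qed
    then have "q = 0" unfolding q_def by simp
    then have "s1 = 0" using s' by simp
    then have uE: "\<forall>x\<in>E. u (Inl x) = 0" unfolding s1_def
      using mp.independentD[OF E(2) E(4) order_refl, of "\<lambda>x. u (Inl x)"] by blast
    show "\<forall>a\<in>E <+> D. u a = 0"
    proof
      fix a assume "a \<in> E <+> D"
      then show "u a = 0" using uD uE by (auto elim: PlusE)
    qed
  qed
  have gK: "g ` (E <+> D) \<subseteq> K"
  proof
    fix y assume "y \<in> g ` (E <+> D)"
    then obtain a where a: "a \<in> E <+> D" "y = g a" by blast
    show "y \<in> K"
    proof (cases a)
      case (Inl x)
      then have "x \<in> Ji" using a(1) E(1) by auto
      then show ?thesis using J_sub_K[of J n i t] a(2) Inl by (auto simp: g_def K_def Ji_def)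
    next
      case (Inr d)
      then have d: "d \<in> D" using a(1) by auto
      then have df: "d \<in> forms n i'" using Df by blast
      have "t * d \<in> forms n (e + i')" by (rule forms_mult[OF tf df])
      moreover have "e + i' = i" using ei by (simp add: i'_def)
      ultimately have tdf: "t * d \<in> forms n i" by simp
      have "d \<in> polyring n" using df forms_sub by blast
      moreover have "0 \<in> J" by (rule mp.subspace_0[OF subJ])
      moreover have "t * d = 0 + d * t" by (simp add: mult.commute)
      ultimately have "t * d \<in> add_principal n J t" unfolding add_principal_def by blast
      then show ?thesis using tdf a(2) Inr by (simp add: g_def K_def)
    qed
  qed
  have "card (g ` (E <+> D)) \<le> mp.dim K"
    using mp.indep_card_le_dim[OF conjunct2[OF fam] gK K_span finite_Wf] by simp
  moreover have "card (g ` (E <+> D)) = card E + card D"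
    using card_image[OF conjunct1[OF fam]] card_Plus[OF E(4) finD] by simp
  ultimately have le1: "int (card E) + int (card D) \<le> int (mp.dim K)" by simp
  have "card B \<le> card C" by (rule card_mono[OF C(5) C(1)])
  then have cD: "int (card D) = int (card C) - int (card B)" using cardD by simp
  have "int (mp.dim Ji) + int (mp.dim (forms n i' :: 'k mpoly set)) - int (mp.dim Ji') \<le> int (mp.dim K)"
    using le1 cD C(6) B(5) E(5) by linarith
  then show ?thesis by (simp add: kdim_eq Ji_def Ji'_def K_def i'_def)
qed

lemma tele:
  fixes h :: "nat \<Rightarrow> int"
  assumes e: "e > 0"
  shows "(\<Sum>i\<le>s. h i - (if e \<le> i then h (i - e) else 0)) = (\<Sum>i\<le>s. if s < i + e then h i else 0)"
proof (induction s)
  case 0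
  then show ?case using e by simp
next
  case (Suc s)
  have split: "(\<Sum>i\<le>s. if s < i + e then h i else 0) =
      (\<Sum>i\<le>s. if Suc s < i + e then h i else 0) + (\<Sum>i\<le>s. if i = Suc s - e then (if e \<le> Suc s then h i else 0) else 0)"
    unfolding sum.distrib[symmetric] by (rule sum.cong) auto
  have "Suc s - e \<in> {..s}" using e by auto
  then have d: "(\<Sum>i\<le>s. if i = Suc s - e then (if e \<le> Suc s then h i else 0) else 0)
      = (if e \<le> Suc s then h (Suc s - e) else 0)" by simp
  have "(\<Sum>i\<le>Suc s. h i - (if e \<le> i then h (i - e) else 0))
      = (\<Sum>i\<le>s. h i - (if e \<le> i then h (i - e) else 0)) + (h (Suc s) - (if e \<le> Suc s then h (Suc s - e) else 0))"
    by (rule sum.atMost_Suc)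
  also have "\<dots> = (\<Sum>i\<le>s. if Suc s < i + e then h i else 0) + h (Suc s)"
    using Suc.IH split d by simp
  also have "\<dots> = (\<Sum>i\<le>Suc s. if Suc s < i + e then h i else 0)"
    using e by simp
  finally show ?case .
qed

lemma window_le:
  fixes h :: "nat \<Rightarrow> int"
  assumes "\<And>i. h i \<le> c" and c0: "0 \<le> c"
  shows "(\<Sum>i\<le>s. if s < i + e then h i else 0) \<le> int e * c"
proof -
  have "(\<Sum>i\<le>s. if s < i + e then h i else 0) \<le> (\<Sum>i\<le>s. if s < i + e then c else 0)"
    by (rule sum_mono) (simp add: assms)
  also have "\<dots> = (\<Sum>i\<in>{i\<in>{..s}. s < i + e}. c)" by (rule sum.inter_filter[symmetric]) simp
  also have "\<dots> = int (card {i\<in>{..s}. s < i + e}) * c" by simp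
  also have "\<dots> \<le> int e * c"
  proof (rule mult_right_mono)
    have "{i\<in>{..s}. s < i + e} \<subseteq> {Suc s - e..s}" by auto
    then have "card {i\<in>{..s}. s < i + e} \<le> card {Suc s - e..s}" by (intro card_mono) auto
    also have "\<dots> \<le> e" by simp
    finally show "int (card {i\<in>{..s}. s < i + e}) \<le> int e" by simp
  qed (rule c0)
  finally show ?thesis .
qed



theorem theorem3p3:
  fixes n d e :: nat and F t :: "'k::field_char_0 mpoly"
    and P :: "(nat \<Rightarrow> 'k) set" and I :: "'k mpoly set"
  assumes "alg_closed_field TYPE('k)"
    and "n \<ge> 1"
    and "F \<in> forms n d"
    and "proj_point_set n P"
    and "ideal_pts n P \<subseteq> perp n F"
    and "e > 0"
    and "\<exists>G. G \<subseteq> forms n e \<and> I = ideal_gen n G"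
    and "t \<in> I \<inter> forms n e"
    and "nonzerodiv_mod n t (colon n (ideal_pts n P) I)"
  shows "\<exists>s0. \<forall>s\<ge>s0.
     int e * int (card P) \<ge> (\<Sum>i\<le>s. HF n (add_principal n (colon n (ideal_pts n P) I) t) i) \<and>
     (\<Sum>i\<le>s. HF n (add_principal n (colon n (ideal_pts n P) I) t) i) \<ge>
     (\<Sum>i\<le>s. HF n (add_principal n (colon n (perp n F) I) t) i)"
proof -
  obtain G where G: "G \<subseteq> forms n e" "I = ideal_gen n G" using assms(7) by blast
  have Ipr: "I \<subseteq> polyring n" unfolding G(2)
    by (rule ideal_gen_sub) (use G(1) forms_sub in blast)
  have finP: "finite P" using assms(4) by (simp add: proj_point_set_def)
  have tf: "t \<in> forms n e" using assms(8) by blast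
  define J where "J = colon n (ideal_pts n P) I"
  define J' where "J' = colon n (perp n F) I"
  define K where "K = add_principal n J t"
  define K' where "K' = add_principal n J' t"
  have subJ: "mp.subspace J" unfolding J_def by (rule subspace_colon_pts)
  have Jpr: "J \<subseteq> polyring n" unfolding J_def by (rule colon_sub)
  have nzd: "nonzerodiv_mod n t J" using assms(9) by (simp add: J_def)
  have KK': "K \<subseteq> K'" unfolding K_def K'_def J_def J'_def
    by (intro add_principal_mono colon_mono assms(5))
  define h where "h i = HF n J i" for i
  have hle: "h i \<le> int (card P)" for i
    unfolding h_def HF_def J_def using hf_le_card[OF finP Ipr, where i=i] by simp
  have step: "HF n K i \<le> h i - (if e \<le> i then h (i - e) else 0)" for i
  proof (cases "e \<le> i")
    case True
    have "int (kdim (J \<inter> forms n i)) + int (kdim (forms n (i - e) :: 'k mpoly set)) - int (kdim (J \<inter> forms n (i - e)))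
       \<le> int (kdim (K \<inter> forms n i))"
      unfolding K_def by (rule hf_step[OF subJ Jpr nzd tf True])
    then show ?thesis using True by (simp add: HF_def h_def)
  next
    case False
    have "J \<inter> forms n i \<subseteq> K \<inter> forms n i" unfolding K_def by (rule J_sub_K)
    moreover have "K \<inter> forms n i \<subseteq> mp.span (Wf n i)" using forms_span by blast
    ultimately have "mp.dim (J \<inter> forms n i) \<le> mp.dim (K \<inter> forms n i)"
      by (rule mp.dim_mono_fin) (rule finite_Wf)
    then show ?thesis using False by (simp add: HF_def h_def kdim_eq)
  qed
  have mono: "HF n K' i \<le> HF n K i" for i
  proof -
    have "K \<inter> forms n i \<subseteq> K' \<inter> forms n i" using KK' by blast
    moreover have "K' \<inter> forms n i \<subseteq> mp.span (Wf n i)" using forms_span by blast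
    ultimately have "mp.dim (K \<inter> forms n i) \<le> mp.dim (K' \<inter> forms n i)"
      by (rule mp.dim_mono_fin) (rule finite_Wf)
    then show ?thesis by (simp add: HF_def kdim_eq)
  qed
  have main: "(\<Sum>i\<le>s. HF n K i) \<le> int e * int (card P) \<and> (\<Sum>i\<le>s. HF n K' i) \<le> (\<Sum>i\<le>s. HF n K i)" for s
  proof
    have "(\<Sum>i\<le>s. HF n K i) \<le> (\<Sum>i\<le>s. h i - (if e \<le> i then h (i - e) else 0))"
      by (rule sum_mono) (rule step)
    also have "\<dots> = (\<Sum>i\<le>s. if s < i + e then h i else 0)" by (rule tele[OF assms(6)])
    also have "\<dots> \<le> int e * int (card P)" by (rule window_le) (simp_all add: hle)
    finally show "(\<Sum>i\<le>s. HF n K i) \<le> int e * int (card P)" .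
    show "(\<Sum>i\<le>s. HF n K' i) \<le> (\<Sum>i\<le>s. HF n K i)" by (rule sum_mono) (rule mono)
  qed
  show ?thesis
    by (rule exI[of _ 0]) (use main in \<open>simp add: K_def K'_def J_def J'_def\<close>)
qed


end
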